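(* Fix a base $B>1$, an integer $m\ge1$, and real numbers $a<b\le0$. Let $P_i^{(j)}$, $1\le i\le m$, $j\ge1$, be independent identically distributed random variables such that $\log_B P_i^{(j)}$ is uniformly distributed on $(a,b)$. Then the maximum side lengths $$\mathfrak{m}_1^{(n)}:=\max_{1\le i\le m}P_i^{(1)}P_i^{(2)}\cdots P_i^{(n)}$$ converge to strong Benford behavior in base $B$ as $n\to\infty$.
   Context: Significand: for $x>0$, $S_B(x)$ is the unique number in $[1,B)$ with $\log_B x-\log_B S_B(x)\in\mathbb{Z}$. A sequence of positive random variables $X^{(n)}$ converges to strong Benford behavior in base $B$ if $\mathbb{P}(S_B(X^{(n)})\le D)\to\log_B D$ for every $D\in[1,B]$. *)

theory Defs
  imports "HOL-Probability.Probability"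
begin

definition significand :: "real \<Rightarrow> real \<Rightarrow> real" where
  "significand B x = (THE s. 1 \<le> s \<and> s < B \<and> log B x - log B s \<in> \<int>)"

definition strong_benford :: "'a measure \<Rightarrow> real \<Rightarrow> (nat \<Rightarrow> 'a \<Rightarrow> real) \<Rightarrow> bool" where
  "strong_benford M B X \<longleftrightarrow>
     (\<forall>D\<in>{1..B}. (\<lambda>n. measure M {x \<in> space M. significand B (X n x) \<le> D}) \<longlonglongrightarrow> log B D)"

end

theory Submission
  imports Defs
begin

lemma prob_space_conv:
  assumes "prob_space M" "prob_space N" "sets M = sets borel" "sets N = sets borel"
  shows "prob_space ((M::real measure) \<star> N)"
proof -
  interpret M: prob_space M by fact
  interpret N: prob_space N by fact
  interpret pair_prob_space M N ..
  have s: "sets (M \<Otimes>\<^sub>M N) = sets (borel \<Otimes>\<^sub>M borel)"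
    by (intro sets_pair_measure_cong) (simp_all add: assms)
  have "(\<lambda>(x,y). x + y :: real) \<in> borel_measurable (borel \<Otimes>\<^sub>M borel)" by measurable
  then have "(\<lambda>(x,y). x + y :: real) \<in> borel_measurable (M \<Otimes>\<^sub>M N)"
    unfolding measurable_cong_sets[OF s refl] .
  then show ?thesis unfolding convolution_def
    by (rule prob_space_distr)
qed

definition tvle :: "real measure \<Rightarrow> real \<Rightarrow> real \<Rightarrow> bool" where
  "tvle \<mu> t e \<longleftrightarrow> (\<forall>A\<in>sets borel. \<bar>measure \<mu> ((\<lambda>x. x + t) -` A) - measure \<mu> A\<bar> \<le> e)"

definition minor :: "real measure \<Rightarrow> real \<Rightarrow> real \<Rightarrow> real \<Rightarrow> bool" where
  "minor \<nu> h u l \<longleftrightarrow> density lborel (\<lambda>x. ennreal h * indicator {u<..<u+l} x) \<le> \<nu>"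

lemma shift_meas_pair:
  assumes "A \<in> sets borel"
  shows "{(x::real, a::real). a + x \<in> A} \<in> sets (borel \<Otimes>\<^sub>M borel)"
proof -
  have "(\<lambda>p::real\<times>real. snd p + fst p) \<in> borel_measurable (borel \<Otimes>\<^sub>M borel)" by measurable
  from measurable_sets[OF this assms] have "{p::real\<times>real. snd p + fst p \<in> A} \<in> sets (borel \<Otimes>\<^sub>M borel)"
    by (simp add: space_pair_measure vimage_def)
  moreover have "{(x::real, a::real). a + x \<in> A} = {p::real\<times>real. snd p + fst p \<in> A}" by auto
  ultimately show ?thesis by simp
qed

lemma fx_measurable:
  fixes \<mu> :: "real measure"
  assumes "prob_space \<mu>" "sets \<mu> = sets borel" "A \<in> sets borel"
  shows "(\<lambda>x. measure \<mu> {a. a + x \<in> A}) \<in> borel_measurable borel"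
proof -
  interpret prob_space \<mu> by fact
  have Q: "{(x::real, a::real). a + x \<in> A} \<in> sets (borel \<Otimes>\<^sub>M \<mu>)"
    by (subst sets_pair_measure_cong[OF refl assms(2)]) (rule shift_meas_pair[OF assms(3)])
  have "(\<lambda>x. emeasure \<mu> (Pair x -` {(x::real, a::real). a + x \<in> A})) \<in> borel_measurable borel"
    by (rule measurable_emeasure_Pair[OF Q])
  then have "(\<lambda>x. enn2real (emeasure \<mu> (Pair x -` {(x::real, a::real). a + x \<in> A}))) \<in> borel_measurable borel"
    by measurable
  moreover have "\<And>x. enn2real (emeasure \<mu> (Pair x -` {(x::real, a::real). a + x \<in> A})) = measure \<mu> {a. a + x \<in> A}"
    by (simp add: measure_def vimage_def)
  ultimately show ?thesis by simp
qed

lemma conv_measure: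
  fixes \<mu> \<nu> :: "real measure"
  assumes "prob_space \<nu>" "sets \<nu> = sets borel" "prob_space \<mu>" "sets \<mu> = sets borel" "A \<in> sets borel"
  shows "measure (\<nu> \<star> \<mu>) A = (\<integral>x. measure \<mu> {a. a + x \<in> A} \<partial>\<nu>)"
proof -
  interpret N: prob_space \<nu> by fact
  interpret M: prob_space \<mu> by fact
  have meas: "(\<lambda>x. measure \<mu> {a. a + x \<in> A}) \<in> borel_measurable \<nu>"
    by (subst measurable_cong_sets[OF assms(2) refl]) (rule fx_measurable[OF assms(3,4,5)])
  have int: "integrable \<nu> (\<lambda>x. measure \<mu> {a. a + x \<in> A})"
    by (rule N.integrable_const_bound[where B=1]) (auto simp: meas)
  have "emeasure (\<nu> \<star> \<mu>) A = (\<integral>\<^sup>+x. emeasure \<mu> {a. a + x \<in> A} \<partial>\<nu>)"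
    by (rule convolution_emeasure) (auto simp: assms N.finite_measure_axioms M.finite_measure_axioms
        sets_eq_imp_space_eq[OF assms(2)] sets_eq_imp_space_eq[OF assms(4)])
  also have "\<dots> = (\<integral>\<^sup>+x. ennreal (measure \<mu> {a. a + x \<in> A}) \<partial>\<nu>)"
    by (simp add: M.emeasure_eq_measure)
  also have "\<dots> = ennreal (\<integral>x. measure \<mu> {a. a + x \<in> A} \<partial>\<nu>)"
    by (rule nn_integral_eq_integral[OF int]) auto
  finally have "emeasure (\<nu> \<star> \<mu>) A = ennreal (\<integral>x. measure \<mu> {a. a + x \<in> A} \<partial>\<nu>)" .
  then show ?thesis
    by (simp add: measure_def)
qed

lemma ind_integrable:
  fixes u v :: real
  shows "integrable lborel (indicator {u<..<v} :: real \<Rightarrow> real)"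
    "integrable lborel (indicator {u..v} :: real \<Rightarrow> real)"
  by (auto intro!: integrable_real_indicator simp: emeasure_lborel_Ioo emeasure_lborel_Icc)
     (cases "u \<le> v"; simp)+

lemma bounded_support_integrable:
  fixes g :: "real \<Rightarrow> real"
  assumes "g \<in> borel_measurable borel" "\<And>x. \<bar>g x\<bar> \<le> C * indicator {u..v} x"
  shows "integrable lborel g"
proof (rule Bochner_Integration.integrable_bound[where f="\<lambda>x. C * indicator {u..v} x"])
  show "integrable lborel (\<lambda>x. C * indicator {u..v} x :: real)"
    using ind_integrable(2)[of u v] by auto
  show "g \<in> borel_measurable lborel" using assms(1) by simp
  show "AE x in lborel. norm (g x) \<le> norm (C * indicator {u..v} x :: real)"
    using assms(2) by (auto intro!: AE_I2 order.trans[OF _ abs_ge_self])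
qed

lemma minor_int:
  fixes \<nu> :: "real measure" and \<phi> :: "real \<Rightarrow> real"
  assumes "prob_space \<nu>" "sets \<nu> = sets borel" "minor \<nu> h u l" "h \<ge> 0"
    "\<phi> \<in> borel_measurable borel" "\<And>x. 0 \<le> \<phi> x" "\<And>x. \<phi> x \<le> C"
  shows "h * (\<integral>x. indicator {u<..<u+l} x * \<phi> x \<partial>lborel) \<le> (\<integral>x. \<phi> x \<partial>\<nu>)"
proof -
  interpret N: prob_space \<nu> by fact
  let ?D = "density lborel (\<lambda>x. ennreal h * indicator {u<..<u+l} x)"
  have C: "C \<ge> 0" using assms(6,7) order.trans by blast
  have m\<nu>: "\<phi> \<in> borel_measurable \<nu>"
    by (subst measurable_cong_sets[OF assms(2) refl]) (rule assms(5))
  have int\<nu>: "integrable \<nu> \<phi>"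
    by (rule N.integrable_const_bound[where B=C]) (use assms(6,7) m\<nu> in auto)
  have intL: "integrable lborel (\<lambda>x. h * (indicator {u<..<u+l} x * \<phi> x))"
    by (rule bounded_support_integrable[where C="h*C" and u=u and v="u+l"])
       (use assms(4,5,6,7) C in \<open>auto simp: indicator_def abs_mult intro: mult_left_mono\<close>)
  have "(\<integral>\<^sup>+x. ennreal (\<phi> x) \<partial>?D) \<le> (\<integral>\<^sup>+x. ennreal (\<phi> x) \<partial>\<nu>)"
    by (rule nn_integral_mono_measure) (use assms(2,3) in \<open>auto simp: minor_def\<close>)
  moreover have "(\<integral>\<^sup>+x. ennreal (\<phi> x) \<partial>?D) = (\<integral>\<^sup>+x. ennreal (h * (indicator {u<..<u+l} x * \<phi> x)) \<partial>lborel)"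
    using assms(4,5,6) by (subst nn_integral_density) (auto intro!: nn_integral_cong simp: indicator_def ennreal_mult)
  moreover have "\<dots> = ennreal (\<integral>x. h * (indicator {u<..<u+l} x * \<phi> x) \<partial>lborel)"
    by (rule nn_integral_eq_integral[OF intL]) (use assms(4,6) in auto)
  moreover have "(\<integral>\<^sup>+x. ennreal (\<phi> x) \<partial>\<nu>) = ennreal (\<integral>x. \<phi> x \<partial>\<nu>)"
    by (rule nn_integral_eq_integral[OF int\<nu>]) (use assms(6) in auto)
  ultimately have "ennreal (\<integral>x. h * (indicator {u<..<u+l} x * \<phi> x) \<partial>lborel) \<le> ennreal (\<integral>x. \<phi> x \<partial>\<nu>)"
    by simp
  then have "(\<integral>x. h * (indicator {u<..<u+l} x * \<phi> x) \<partial>lborel) \<le> (\<integral>x. \<phi> x \<partial>\<nu>)"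
    by (subst (asm) ennreal_le_iff) (auto intro!: integral_nonneg_AE simp: assms(6))
  then show ?thesis by simp
qed

lemma shift_int:
  fixes f :: "real \<Rightarrow> real"
  assumes f: "f \<in> borel_measurable borel" "\<And>x. 0 \<le> f x" "\<And>x. f x \<le> 1" and t: "t \<ge> 0" and l: "l \<ge> 0"
  shows "\<bar>\<integral>x. indicator {u<..<u+l} x * (f (x + t) - f x) \<partial>lborel\<bar> \<le> t"
proof -
  let ?I = "{u<..<u+l}"
  let ?k = "\<lambda>x. (indicator ?I (x - t) - indicator ?I x) * f x :: real"
  have i1: "integrable lborel (\<lambda>x. indicator ?I x * f x)"
    by (rule bounded_support_integrable[where C=1 and u=u and v="u+l"]) (use f in \<open>auto simp: indicator_def\<close>)
  have i2: "integrable lborel (\<lambda>x. indicator ?I x * f (x + t))"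
    by (rule bounded_support_integrable[where C=1 and u=u and v="u+l"]) (use f in \<open>auto simp: indicator_def\<close>)
  have i3: "integrable lborel (\<lambda>x. indicator ?I (x - t) * f x)"
    by (rule bounded_support_integrable[where C=1 and u="u+t" and v="u+l+t"]) (use f in \<open>auto simp: indicator_def\<close>)
  have sh: "(\<integral>x. indicator ?I (x - t) * f x \<partial>lborel) = (\<integral>x. indicator ?I x * f (x + t) \<partial>lborel)"
    by (subst lborel_integral_real_affine[where c=1 and t=t]) (simp_all add: add.commute)
  have eq: "(\<integral>x. indicator ?I x * (f (x + t) - f x) \<partial>lborel) = (\<integral>x. ?k x \<partial>lborel)"
  proof -
    have "(\<integral>x. indicator ?I x * (f (x + t) - f x) \<partial>lborel)
        = (\<integral>x. indicator ?I x * f (x + t) \<partial>lborel) - (\<integral>x. indicator ?I x * f x \<partial>lborel)"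
      using i1 i2 by (simp add: right_diff_distrib)
    also have "\<dots> = (\<integral>x. indicator ?I (x - t) * f x \<partial>lborel) - (\<integral>x. indicator ?I x * f x \<partial>lborel)"
      using sh by simp
    also have "\<dots> = (\<integral>x. ?k x \<partial>lborel)"
      using i1 i3 by (simp add: left_diff_distrib)
    finally show ?thesis .
  qed
  have ik: "integrable lborel ?k" using i1 i3 by (simp add: left_diff_distrib)
  have up: "\<And>x. ?k x \<le> indicator {u+l..u+l+t} x"
  proof -
    fix x show "?k x \<le> indicator {u+l..u+l+t} x"
      using f(2)[of x] f(3)[of x] t by (auto simp: indicator_def)
  qed
  have lo: "\<And>x. - indicator {u..u+t} x \<le> ?k x"
  proof -
    fix x show "- indicator {u..u+t} x \<le> ?k x"
      using f(2)[of x] f(3)[of x] t by (auto simp: indicator_def)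
  qed
  have "(\<integral>x. ?k x \<partial>lborel) \<le> (\<integral>x. indicator {u+l..u+l+t} x \<partial>lborel)"
    by (rule integral_mono[OF ik ind_integrable(2)]) (use up in auto)
  also have "\<dots> = t" using t by (simp add: measure_def emeasure_lborel_Icc)
  finally have A: "(\<integral>x. ?k x \<partial>lborel) \<le> t" .
  have "(\<integral>x. - indicator {u..u+t} x \<partial>lborel) \<le> (\<integral>x. ?k x \<partial>lborel)"
    by (rule integral_mono[OF _ ik]) (use lo ind_integrable(2)[of u "u+t"] in auto)
  moreover have "(\<integral>x. - indicator {u..u+t} x \<partial>lborel) = - t" using t by (simp add: measure_def emeasure_lborel_Icc)
  ultimately have B: "- t \<le> (\<integral>x. ?k x \<partial>lborel)" by simp
  show ?thesis using A B eq by simp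
qed

lemma tvle_nonneg: "tvle \<mu> t e \<Longrightarrow> 0 \<le> e"
  unfolding tvle_def by (drule bspec[of _ _ "{}"]) auto

lemma shift_sets: "A \<in> sets borel \<Longrightarrow> (\<lambda>x::real. x + t) -` A \<in> sets borel"
proof -
  assume A: "A \<in> sets borel"
  have "(\<lambda>x::real. x + t) \<in> borel_measurable borel" by measurable
  from measurable_sets[OF this A] show ?thesis by simp
qed

lemma shift_sets2: "A \<in> sets borel \<Longrightarrow> {a::real. a + x \<in> A} \<in> sets borel"
  using shift_sets[of A x] by (simp add: vimage_def)

lemma ind_const_int: "l \<ge> 0 \<Longrightarrow> (\<integral>x. indicator {u<..<u+l} x * c \<partial>lborel) = c * (l::real)"
  using ind_integrable(1)[of u "u+l"] by (simp add: measure_def emeasure_lborel_Ioo)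

lemma mix:
  fixes \<mu> \<nu> :: "real measure"
  assumes \<nu>: "prob_space \<nu>" "sets \<nu> = sets borel" and \<mu>: "prob_space \<mu>" "sets \<mu> = sets borel"
    and mi: "minor \<nu> h u l" "h \<ge> 0" "l \<ge> 0" and t: "t \<ge> 0" and tv: "tvle \<mu> t e"
  shows "tvle (\<nu> \<star> \<mu>) t ((1 - h*l)*e + h*t)"
  unfolding tvle_def
proof
  fix A :: "real set" assume A: "A \<in> sets borel"
  interpret N: prob_space \<nu> by fact
  interpret M: prob_space \<mu> by fact
  define f where "f x = measure \<mu> {a. a + x \<in> A}" for x
  define g where "g x = f (x + t) - f x" for x
  have e0: "0 \<le> e" using tvle_nonneg[OF tv] .
  have fm: "f \<in> borel_measurable borel" unfolding f_def by (rule fx_measurable[OF \<mu> A])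
  have f01: "0 \<le> f x" "f x \<le> 1" for x unfolding f_def by auto
  have fm2: "(\<lambda>x. f (x + t)) \<in> borel_measurable borel" using fm by measurable
  have gm: "g \<in> borel_measurable borel" unfolding g_def using fm fm2 by measurable
  have gb: "\<bar>g x\<bar> \<le> e" for x
  proof -
    have S: "{a. a + x \<in> A} \<in> sets borel" by (rule shift_sets2[OF A])
    have "(\<lambda>y. y + t) -` {a. a + x \<in> A} = {a. a + (x + t) \<in> A}" by (auto simp: algebra_simps)
    then show ?thesis using tv S unfolding tvle_def g_def f_def by auto
  qed
  have mN: "\<And>k. k \<in> borel_measurable borel \<Longrightarrow> k \<in> borel_measurable \<nu>"
    by (subst measurable_cong_sets[OF \<nu>(2) refl])
  have c1: "measure (\<nu> \<star> \<mu>) ((\<lambda>x. x + t) -` A) = (\<integral>x. f (x + t) \<partial>\<nu>)"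
    unfolding f_def using conv_measure[OF \<nu> \<mu> shift_sets[OF A, of t]]
    by (simp add: add.assoc)
  have c2: "measure (\<nu> \<star> \<mu>) A = (\<integral>x. f x \<partial>\<nu>)"
    unfolding f_def using conv_measure[OF \<nu> \<mu> A] by simp
  have if1: "integrable \<nu> f"
    by (rule N.integrable_const_bound[where B=1]) (use f01 mN[OF fm] in auto)
  have if2: "integrable \<nu> (\<lambda>x. f (x + t))"
    by (rule N.integrable_const_bound[where B=1]) (use f01 mN[OF fm2] in auto)
  have diff: "measure (\<nu> \<star> \<mu>) ((\<lambda>x. x + t) -` A) - measure (\<nu> \<star> \<mu>) A = (\<integral>x. g x \<partial>\<nu>)"
    unfolding c1 c2 g_def using if1 if2 by simp
  define G where "G = (\<integral>x. indicator {u<..<u+l} x * g x \<partial>lborel)"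
  have Gb: "\<bar>G\<bar> \<le> t" unfolding G_def g_def by (rule shift_int[OF fm f01 t mi(3)])
  have igL: "integrable lborel (\<lambda>x. indicator {u<..<u+l} x * g x)"
    by (rule bounded_support_integrable[where C=e and u=u and v="u+l"])
       (use gm gb e0 in \<open>auto simp: indicator_def\<close>)
  have igN: "integrable \<nu> g"
    by (rule N.integrable_const_bound[where B=e]) (use gb mN[OF gm] in auto)
  have L1: "(\<integral>x. indicator {u<..<u+l} x * (e - g x) \<partial>lborel) = e * l - G"
    using igL ind_const_int[OF mi(3), of u e] ind_integrable(1)[of u "u+l"] unfolding G_def
    by (simp add: right_diff_distrib)
  have L2: "(\<integral>x. indicator {u<..<u+l} x * (e + g x) \<partial>lborel) = e * l + G"
    using igL ind_const_int[OF mi(3), of u e] ind_integrable(1)[of u "u+l"] unfolding G_def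
    by (simp add: distrib_left)
  have m1: "h * (e * l - G) \<le> e - (\<integral>x. g x \<partial>\<nu>)"
  proof -
    have "h * (\<integral>x. indicator {u<..<u+l} x * (e - g x) \<partial>lborel) \<le> (\<integral>x. e - g x \<partial>\<nu>)"
      by (rule minor_int[OF \<nu> mi(1,2), where C="2*e"]) (use gm gb in \<open>auto simp: abs_le_iff\<close>)
    then show ?thesis unfolding L1 using igN by (simp add: N.prob_space)
  qed
  have m2: "h * (e * l + G) \<le> e + (\<integral>x. g x \<partial>\<nu>)"
  proof -
    have "h * (\<integral>x. indicator {u<..<u+l} x * (e + g x) \<partial>lborel) \<le> (\<integral>x. e + g x \<partial>\<nu>)"
      by (rule minor_int[OF \<nu> mi(1,2), where C="2*e"]) (use gm gb in \<open>auto simp: abs_le_iff, smt (verit) gb abs_le_iff\<close>)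
    then show ?thesis unfolding L2 using igN by (simp add: N.prob_space)
  qed
  have hG: "\<bar>h * G\<bar> \<le> h * t" using Gb mi(2) by (simp add: abs_mult mult_left_mono)
  show "\<bar>measure (\<nu> \<star> \<mu>) ((\<lambda>x. x + t) -` A) - measure (\<nu> \<star> \<mu>) A\<bar> \<le> (1 - h * l) * e + h * t"
    unfolding diff using m1 m2 hG
    apply (simp only: abs_le_iff algebra_simps)
    by linarith
qed

lemma le_measureI:
  assumes "sets M = sets N" "\<And>A. A \<in> sets M \<Longrightarrow> emeasure M A \<le> emeasure N A"
  shows "M \<le> N"
proof -
  have "emeasure M A \<le> emeasure N A" for A
    by (cases "A \<in> sets N") (use assms in \<open>auto simp: emeasure_notin_sets\<close>)
  then show ?thesis unfolding le_measure_iff le_fun_def using assms sets_eq_imp_space_eq[OF assms(1)]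
    by auto
qed

lemma U_density:
  fixes a b :: real assumes "a < b"
  shows "uniform_measure lborel {a<..<b} = density lborel (\<lambda>x. ennreal (1/(b-a)) * indicator {a<..<b} x)"
proof -
  have d: "1 / ennreal (b-a) = ennreal (1/(b-a))" using divide_ennreal[of 1 "b-a"] assms by simp
  show ?thesis unfolding uniform_measure_def using assms
    by (intro density_cong) (auto simp: indicator_def d)
qed

lemma minor_U:
  fixes a b :: real assumes "a < b"
  shows "minor (uniform_measure lborel {a<..<b}) (1/(b-a)) a (b-a)"
  unfolding minor_def U_density[OF assms] by simp

lemma minor_zero: "sets \<nu> = sets borel \<Longrightarrow> minor \<nu> 0 u l"
  unfolding minor_def by (rule le_measureI) (auto simp: emeasure_density)

lemma minor_step:
  fixes a b h u l :: real and X :: "real measure"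
  assumes ab: "a < b" and X: "prob_space X" "sets X = sets borel" and mi: "minor X h u l" "h \<ge> 0"
    and l: "l \<ge> b - a"
  shows "minor (uniform_measure lborel {a<..<b} \<star> X) (h/4) (u + a + (b-a)/4) (l + (b-a)/2)"
  unfolding minor_def
proof (rule le_measureI)
  define w where "w = b - a"
  have w: "w > 0" using ab by (simp add: w_def)
  let ?U = "uniform_measure lborel {a<..<b}"
  let ?I = "{u<..<u+l}"
  let ?J = "{u + a + (b-a)/4 <..< u + a + (b-a)/4 + (l + (b-a)/2)}"
  interpret XP: prob_space X by fact
  have Up: "prob_space ?U" using ab by (intro prob_space_uniform_measure) auto
  interpret UP: prob_space ?U by (rule Up)
  show "sets (density lborel (\<lambda>x. ennreal (h / 4) * indicator ?J x)) = sets (?U \<star> X)" by simp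
  fix A assume "A \<in> sets (density lborel (\<lambda>x. ennreal (h / 4) * indicator ?J x))"
  then have A[measurable]: "A \<in> sets borel" by simp
  have e0: "emeasure (?U \<star> X) A = (\<integral>\<^sup>+x. emeasure X {y. y + x \<in> A} \<partial>?U)"
    by (rule convolution_emeasure) (auto simp: X UP.finite_measure_axioms XP.finite_measure_axioms
        sets_eq_imp_space_eq[OF X(2)])
  have e1: "(\<integral>\<^sup>+x. emeasure X {y. y + x \<in> A} \<partial>?U) \<ge> (\<integral>\<^sup>+x. emeasure (density lborel (\<lambda>x. ennreal h * indicator ?I x)) {y. y + x \<in> A} \<partial>?U)"
    by (intro nn_integral_mono le_measureD3[OF mi(1)[unfolded minor_def]]) (auto simp: X)
  have s1: "emeasure (?U \<star> X) A \<ge> (\<integral>\<^sup>+x. emeasure (density lborel (\<lambda>x. ennreal h * indicator ?I x)) {y. y + x \<in> A} \<partial>?U)"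
    using e0 e1 by simp
  have s2: "(\<integral>\<^sup>+x. emeasure (density lborel (\<lambda>x. ennreal h * indicator ?I x)) {y. y + x \<in> A} \<partial>?U)
     = (\<integral>\<^sup>+x. ennreal (1/w) * indicator {a<..<b} x *
           (\<integral>\<^sup>+y. ennreal h * indicator ?I y * indicator A (y + x) \<partial>lborel) \<partial>lborel)"
  proof -
    have "\<And>x. emeasure (density lborel (\<lambda>x. ennreal h * indicator ?I x)) {y. y + x \<in> A}
        = (\<integral>\<^sup>+y. ennreal h * indicator ?I y * indicator A (y + x) \<partial>lborel)"
      by (subst emeasure_density) (auto intro!: nn_integral_cong shift_sets2 simp: indicator_def)
    moreover have "(\<lambda>x. \<integral>\<^sup>+y. ennreal h * indicator ?I y * indicator A (y + x) \<partial>lborel) \<in> borel_measurable borel"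
      by measurable
    ultimately show ?thesis
      unfolding U_density[OF ab] w_def by (subst nn_integral_density) (auto simp: mult.assoc)
  qed
  have s3: "\<And>x. (\<integral>\<^sup>+y. ennreal h * indicator ?I y * indicator A (y + x) \<partial>lborel)
      = (\<integral>\<^sup>+s. ennreal h * indicator ?I (s - x) * indicator A s \<partial>lborel)"
    by (subst nn_integral_real_affine[where c=1 and t="-x"]) auto
  have s4: "(\<integral>\<^sup>+x. ennreal (1/w) * indicator {a<..<b} x *
           (\<integral>\<^sup>+s. ennreal h * indicator ?I (s - x) * indicator A s \<partial>lborel) \<partial>lborel)
      = (\<integral>\<^sup>+x. (\<integral>\<^sup>+s. ennreal (1/w) * indicator {a<..<b} x * (ennreal h * indicator ?I (s - x) * indicator A s) \<partial>lborel) \<partial>lborel)"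
    by (intro nn_integral_cong) (rule nn_integral_cmult[symmetric], measurable)
  have s5: "\<dots> = (\<integral>\<^sup>+s. (\<integral>\<^sup>+x. ennreal (1/w) * indicator {a<..<b} x * (ennreal h * indicator ?I (s - x) * indicator A s) \<partial>lborel) \<partial>lborel)"
    by (rule lborel_pair.Fubini'[symmetric]) measurable
  have s6: "\<And>s. (\<integral>\<^sup>+x. ennreal (1/w) * indicator {a<..<b} x * (ennreal h * indicator ?I (s - x) * indicator A s) \<partial>lborel)
      \<ge> ennreal (h/4) * indicator ?J s * indicator A s"
  proof -
    fix s
    have "(\<integral>\<^sup>+x. ennreal (1/w) * indicator {a<..<b} x * (ennreal h * indicator ?I (s - x) * indicator A s) \<partial>lborel)
        = (\<integral>\<^sup>+x. (ennreal (1/w) * ennreal h * indicator A s) * indicator ({a<..<b} \<inter> {s-u-l<..<s-u}) x \<partial>lborel)"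
      by (intro nn_integral_cong) (auto simp: indicator_def)
    also have "\<dots> = ennreal (1/w) * ennreal h * indicator A s * emeasure lborel ({a<..<b} \<inter> {s-u-l<..<s-u})"
      by (rule nn_integral_cmult_indicator) simp
    finally have eq: "(\<integral>\<^sup>+x. ennreal (1/w) * indicator {a<..<b} x * (ennreal h * indicator ?I (s - x) * indicator A s) \<partial>lborel)
        = ennreal (1/w) * ennreal h * indicator A s * emeasure lborel ({a<..<b} \<inter> {s-u-l<..<s-u})" .
    show "?thesis s"
    proof (cases "s \<in> ?J")
      case False then show ?thesis by (simp add: eq)
    next
      case True
      have int: "{a<..<b} \<inter> {s-u-l<..<s-u} = {max a (s-u-l)<..<min b (s-u)}" by auto
      have len: "min b (s-u) - max a (s-u-l) \<ge> w/4"
      proof -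
        have c1: "s - u > a + w/4" "s - u < l + b - w/4" using True unfolding w_def by (auto simp: field_simps)
        have c2: "b - a = w" unfolding w_def by simp
        have d: "b - a \<ge> w/4" "b - (s-u-l) \<ge> w/4" "(s-u) - a \<ge> w/4" "(s-u) - (s-u-l) \<ge> w/4"
          using c1 c2 l w by linarith+
        show ?thesis
        proof (cases "b \<le> s - u")
          case True
          then show ?thesis using d by (cases "a \<le> s-u-l") (simp_all add: min_def max_def)
        next
          case False
          then show ?thesis using d by (cases "a \<le> s-u-l") (simp_all add: min_def max_def)
        qed
      qed
      have "emeasure lborel ({a<..<b} \<inter> {s-u-l<..<s-u}) = ennreal (min b (s-u) - max a (s-u-l))"
      proof -
        have le: "max a (s-u-l) \<le> min b (s-u)" using len w by linarith
        show ?thesis unfolding int using le by (rule emeasure_lborel_Ioo)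
      qed
      also have "\<dots> \<ge> ennreal (w/4)" using len by (simp add: ennreal_leI)
      finally have "emeasure lborel ({a<..<b} \<inter> {s-u-l<..<s-u}) \<ge> ennreal (w/4)" .
      then have "ennreal (1/w) * ennreal h * indicator A s * ennreal (w/4) \<le> ennreal (1/w) * ennreal h * indicator A s * emeasure lborel ({a<..<b} \<inter> {s-u-l<..<s-u})"
        by (intro mult_left_mono) auto
      moreover have "ennreal (1/w) * ennreal h * indicator A s * ennreal (w/4) = ennreal (h/4) * indicator ?J s * indicator A s"
        using True w mi(2) by (simp add: ennreal_mult[symmetric] indicator_def)
      ultimately show ?thesis using eq by simp
    qed
  qed
  have "emeasure (density lborel (\<lambda>x. ennreal (h / 4) * indicator ?J x)) A
      = (\<integral>\<^sup>+s. ennreal (h/4) * indicator ?J s * indicator A s \<partial>lborel)"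
    by (subst emeasure_density) auto
  also have "\<dots> \<le> (\<integral>\<^sup>+s. (\<integral>\<^sup>+x. ennreal (1/w) * indicator {a<..<b} x * (ennreal h * indicator ?I (s - x) * indicator A s) \<partial>lborel) \<partial>lborel)"
    by (intro nn_integral_mono s6)
  also have "\<dots> = (\<integral>\<^sup>+x. emeasure (density lborel (\<lambda>x. ennreal h * indicator ?I x)) {y. y + x \<in> A} \<partial>?U)"
    unfolding s2 s3 s4 s5 ..
  also have "\<dots> \<le> emeasure (?U \<star> X) A" by (rule s1)
  finally show "emeasure (density lborel (\<lambda>x. ennreal (h / 4) * indicator ?J x)) A \<le> emeasure (?U \<star> X) A" .
qed

lemma prob_fin: "prob_space M \<Longrightarrow> finite_measure M" by (simp add: prob_space_def)

fun cpow :: "real measure \<Rightarrow> nat \<Rightarrow> real measure" where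
  "cpow U 0 = return borel 0"
| "cpow U (Suc n) = (U \<star> cpow U n)"

lemma emeasure_shift_measurable:
  fixes \<mu> :: "real measure"
  assumes "prob_space \<mu>" "sets \<mu> = sets borel" "A \<in> sets borel"
  shows "(\<lambda>x. emeasure \<mu> {a. a + x \<in> A}) \<in> borel_measurable borel"
proof -
  interpret prob_space \<mu> by fact
  have Q: "{(x::real, a::real). a + x \<in> A} \<in> sets (borel \<Otimes>\<^sub>M \<mu>)"
    by (subst sets_pair_measure_cong[OF refl assms(2)]) (rule shift_meas_pair[OF assms(3)])
  have "(\<lambda>x. emeasure \<mu> (Pair x -` {(x::real, a::real). a + x \<in> A})) \<in> borel_measurable borel"
    by (rule measurable_emeasure_Pair[OF Q])
  then show ?thesis by (simp add: vimage_def)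
qed

lemma return_conv:
  fixes X :: "real measure"
  assumes "prob_space X" "sets X = sets borel"
  shows "(return borel 0 \<star> X) = X"
proof (rule measure_eqI)
  interpret XP: prob_space X by fact
  interpret R: prob_space "return borel (0::real)" by (rule prob_space_return) simp
  show "sets (return borel 0 \<star> X) = sets X" using assms by simp
  fix A assume "A \<in> sets (return borel 0 \<star> X)"
  then have A: "A \<in> sets borel" by simp
  have "emeasure (return borel 0 \<star> X) A = (\<integral>\<^sup>+x. emeasure X {a. a + x \<in> A} \<partial>return borel 0)"
    by (rule convolution_emeasure) (auto simp: assms A R.finite_measure_axioms XP.finite_measure_axioms
        sets_eq_imp_space_eq[OF assms(2)])
  also have "\<dots> = emeasure X {a. a + 0 \<in> A}"
    by (rule nn_integral_return) (auto intro: emeasure_shift_measurable[OF assms A])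
  finally show "emeasure (return borel 0 \<star> X) A = emeasure X A" by simp
qed

lemma cpow_rprob:
  assumes "prob_space U" "sets U = sets borel"
  shows "prob_space (cpow U n) \<and> sets (cpow U n) = sets borel"
proof (induction n)
  case 0 then show ?case by (simp add: prob_space_return)
next
  case (Suc n) then show ?case using assms by (simp add: prob_space_conv)
qed

lemma cpow_add:
  assumes "prob_space U" "sets U = sets borel"
  shows "cpow U (p + q) = (cpow U p \<star> cpow U q)"
proof (induction p)
  case 0 then show ?case using cpow_rprob[OF assms, of q] by (simp add: return_conv)
next
  case (Suc p)
  have "cpow U (Suc p + q) = (U \<star> (cpow U p \<star> cpow U q))" using Suc by simp
  also have "\<dots> = ((U \<star> cpow U p) \<star> cpow U q)"
    using cpow_rprob[OF assms, of p] cpow_rprob[OF assms, of q] assms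
    by (intro convolution_associative) (auto intro: prob_fin)
  finally show ?case by simp
qed

lemma cpow_one:
  assumes "prob_space U" "sets U = sets borel"
  shows "cpow U 1 = U"
proof -
  have "cpow U 1 = (U \<star> return borel 0)" by simp
  also have "\<dots> = (return borel 0 \<star> U)"
    using assms prob_fin[OF prob_space_return[of "0::real" borel]]
    by (intro convolution_commutative) (auto intro: prob_fin)
  also have "\<dots> = U" by (rule return_conv[OF assms])
  finally show ?thesis .
qed

lemma tvle_trivial:
  assumes "prob_space \<mu>" "e \<ge> 1" shows "tvle \<mu> t e"
proof -
  interpret prob_space \<mu> by fact
  show ?thesis unfolding tvle_def
  proof
    fix A :: "real set"
    have "prob ((\<lambda>x. x + t) -` A) \<le> 1" "prob A \<le> 1" "0 \<le> prob ((\<lambda>x. x + t) -` A)" "0 \<le> prob A"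
      by auto
    then show "\<bar>prob ((\<lambda>x. x + t) -` A) - prob A\<bar> \<le> e" using assms(2) by linarith
  qed
qed

lemma tvle_mono: "tvle \<mu> t e \<Longrightarrow> e \<le> e' \<Longrightarrow> tvle \<mu> t e'"
  unfolding tvle_def by force

lemma four_pow: "1 + real k / 2 \<le> 4 ^ k"
proof (induction k)
  case 0 then show ?case by simp
next
  case (Suc k)
  have "1 + real (Suc k) / 2 = (1 + real k / 2) + 1/2" by (simp add: field_simps)
  also have "\<dots> \<le> 4 ^ k + 1/2" using Suc by simp
  also have "\<dots> \<le> 4 ^ Suc k"
  proof -
    have "(4::real)^Suc k = 4 * 4^k" by simp
    then show ?thesis using one_le_power[of "4::real" k] by linarith
  qed
  finally show ?case .
qed

context
  fixes a b :: real and U :: "real measure"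
  assumes ab: "a < b" and U: "U = uniform_measure lborel {a<..<b}"
begin

lemma U_rprob: "prob_space U" "sets U = sets borel"
  using ab U by (auto intro!: prob_space_uniform_measure)

lemma cpow_minor: "\<exists>u. minor (cpow U (Suc k)) ((1/(b-a)) / 4^k) u ((b-a) + real k * (b-a)/2)"
proof (induction k)
  case 0 then show ?case using minor_U[OF ab] cpow_one[OF U_rprob] U by auto
next
  case (Suc k)
  then obtain u where u: "minor (cpow U (Suc k)) ((1/(b-a)) / 4^k) u ((b-a) + real k * (b-a)/2)" by blast
  have r: "prob_space (cpow U (Suc k))" "sets (cpow U (Suc k)) = sets borel"
    using cpow_rprob[OF U_rprob, of "Suc k"] by auto
  have "minor (uniform_measure lborel {a<..<b} \<star> cpow U (Suc k)) (((1/(b-a)) / 4^k)/4) (u + a + (b-a)/4) (((b-a) + real k * (b-a)/2) + (b-a)/2)"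
    by (rule minor_step[OF ab r u]) (use ab in auto)
  then have "minor (U \<star> cpow U (Suc k)) (((1/(b-a)) / 4^k)/4) (u + a + (b-a)/4) (((b-a) + real k * (b-a)/2) + (b-a)/2)"
    using U by simp
  then have m: "minor (cpow U (Suc (Suc k))) (((1/(b-a)) / 4^k)/4) (u + a + (b-a)/4) (((b-a) + real k * (b-a)/2) + (b-a)/2)"
    by (simp only: cpow.simps)
  have e1: "((1/(b-a)) / 4^k)/4 = (1/(b-a)) / 4^Suc k" by simp
  have e2: "((b-a) + real k * (b-a)/2) + (b-a)/2 = (b-a) + real (Suc k) * (b-a)/2"
    by (simp add: field_simps)
  show ?case using m unfolding e1 e2 by blast
qed

lemma tv_decay:
  assumes e: "e > 0"
  shows "\<exists>N. \<forall>n\<ge>N. \<forall>t\<in>{0..1}. tvle (cpow U n) t e"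
proof -
  define w where "w = b - a"
  have w: "w > 0" using ab by (simp add: w_def)
  obtain k :: nat where k: "4 / (e * w) < real k" using reals_Archimedean2 by blast
  define h where "h = (1/w) / 4^k"
  define l where "l = w + real k * w / 2"
  define c where "c = h * l"
  define K where "K = Suc k"
  obtain u where u: "minor (cpow U K) h u l" using cpow_minor[of k] unfolding K_def h_def l_def w_def by blast
  have h0: "h > 0" unfolding h_def using w by simp
  have l0: "l > 0" unfolding l_def using w by (simp add: add_pos_nonneg)
  have c0: "c > 0" unfolding c_def using h0 l0 by simp
  have c1: "c \<le> 1"
  proof -
    have "c = (1 + real k / 2) / 4^k" unfolding c_def h_def l_def using w by (simp add: field_simps)
    also have "\<dots> \<le> 1" using four_pow[of k] by simp
    finally show ?thesis .
  qed
  have hl: "h = c / l" unfolding c_def using l0 by simp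
  have le: "1 / l < e / 2"
  proof -
    have "real k * w / 2 > 2 / e" using k w e by (simp add: field_simps)
    then have "l > 2 / e" unfolding l_def using w by linarith
    then show ?thesis using e l0 by (simp add: field_simps)
  qed
  have rp: "\<And>n. prob_space (cpow U n)" "\<And>n. sets (cpow U n) = sets borel"
    using cpow_rprob[OF U_rprob] by auto
  have iter: "tvle (cpow U (r * K)) t ((1 - c)^r + t / l)" if t: "t \<in> {0..1}" for r t
  proof (induction r)
    case 0 then show ?case using t l0 by (auto intro!: tvle_trivial prob_space_return)
  next
    case (Suc r)
    have "tvle (cpow U K \<star> cpow U (r * K)) t ((1 - h*l) * ((1 - c)^r + t / l) + h * t)"
      by (rule mix[OF rp rp u _ _ _ Suc]) (use h0 l0 t in auto)
    moreover have "cpow U (Suc r * K) = (cpow U K \<star> cpow U (r * K))"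
      using cpow_add[OF U_rprob, of K "r*K"] by simp
    moreover have "(1 - h*l) * ((1 - c)^r + t / l) + h * t = (1 - c)^Suc r + t / l"
      unfolding c_def[symmetric] hl using l0 by (simp add: field_simps)
    ultimately show ?case by simp
  qed
  obtain r where r: "(1 - c)^r < e / 2" using real_arch_pow_inv[of "e/2" "1 - c"] e c0 by auto
  show ?thesis
  proof (intro exI[of _ "r * K"] allI impI ballI)
    fix n and t :: real assume n: "r * K \<le> n" and t: "t \<in> {0..1}"
    have "tvle (cpow U (n - r*K) \<star> cpow U (r * K)) t ((1 - 0*0) * ((1 - c)^r + t / l) + 0 * t)"
      by (rule mix[OF rp rp minor_zero[OF rp(2)] _ _ _ iter[OF t]]) (use t in auto)
    moreover have "cpow U n = (cpow U (n - r*K) \<star> cpow U (r * K))"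
      using cpow_add[OF U_rprob, of "n - r*K" "r*K"] n by simp
    moreover have "(1 - c)^r + t / l \<le> e"
    proof -
      have "t / l \<le> 1 / l" using t l0 by (simp add: divide_right_mono)
      then show ?thesis using r le by linarith
    qed
    ultimately show "tvle (cpow U n) t e" by (auto intro: tvle_mono)
  qed
qed

end

lemma frac_measurable[measurable]: "(frac :: real \<Rightarrow> real) \<in> borel_measurable borel"
proof -
  have "(\<lambda>x::real. x - real_of_int \<lfloor>x\<rfloor>) \<in> borel_measurable borel"
    using borel_measurable_real_floor by measurable
  moreover have "frac = (\<lambda>x::real. x - real_of_int \<lfloor>x\<rfloor>)" by (rule ext) (simp add: frac_def)
  ultimately show ?thesis by simp
qed

lemma frac_set_sets: "{x::real. frac x \<le> \<delta>} \<in> sets borel"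
  by measurable

lemma frac_shift_measure:
  fixes x \<delta> :: real
  assumes d: "0 \<le> \<delta>" "\<delta> \<le> 1"
  shows "emeasure lborel {t\<in>{0..1}. frac (x + t) \<le> \<delta>} = ennreal \<delta>"
proof -
  define y where "y = frac x"
  have y: "0 \<le> y" "y < 1" unfolding y_def by (auto simp: frac_lt_1)
  have fx: "frac (x + t) = frac (y + t)" for t unfolding y_def by simp
  have f1: "frac (y + t) = y + t" if "0 \<le> t" "t < 1 - y" for t
    using that y by (intro frac_eq_id) auto
  have f2: "frac (y + t) = y + t - 1" if "1 - y \<le> t" "t \<le> 1" for t
  proof -
    have "frac (y + t) = frac ((y + t - 1) + 1)" by simp
    also have "\<dots> = frac (y + t - 1)" by (rule frac_1_eq)
    also have "\<dots> = y + t - 1" using that y by (intro frac_eq_id) auto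
    finally show ?thesis .
  qed
  define S1 where "S1 = {t. 0 \<le> t \<and> t < 1 - y \<and> t \<le> \<delta> - y}"
  define S2 where "S2 = {t. 1 - y \<le> t \<and> t \<le> 1 \<and> t \<le> 1 + \<delta> - y}"
  have S: "{t\<in>{0..1}. frac (x + t) \<le> \<delta>} = S1 \<union> S2"
  proof (intro set_eqI iffI)
    fix t assume "t \<in> {t\<in>{0..1}. frac (x + t) \<le> \<delta>}"
    then show "t \<in> S1 \<union> S2" unfolding S1_def S2_def fx
      using f1[of t] f2[of t] by (cases "t < 1 - y") auto
  next
    fix t assume "t \<in> S1 \<union> S2"
    then show "t \<in> {t\<in>{0..1}. frac (x + t) \<le> \<delta>}" unfolding S1_def S2_def fx
      using f1[of t] f2[of t] y by auto
  qed
  have S1m: "S1 \<in> sets lborel" unfolding S1_def by measurable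
  have S2m: "S2 \<in> sets lborel" unfolding S2_def by measurable
  have disj: "S1 \<inter> S2 = {}" unfolding S1_def S2_def by auto
  have "emeasure lborel (S1 \<union> S2) = emeasure lborel S1 + emeasure lborel S2"
    by (rule plus_emeasure[OF S1m S2m disj, symmetric])
  moreover have "emeasure lborel S1 + emeasure lborel S2 = ennreal \<delta>"
  proof (cases "y \<le> \<delta>")
    case True
    have e2: "S2 = {1 - y..1}" unfolding S2_def using True by auto
    show ?thesis
    proof (cases "\<delta> < 1")
      case True2: True
      have e1: "S1 = {0..\<delta> - y}" unfolding S1_def using True True2 by auto
      show ?thesis unfolding e1 e2 using True y
        by (simp add: ennreal_plus[symmetric] del: ennreal_plus)
    next
      case False
      then have d1: "\<delta> = 1" using d by simp
      have e1: "S1 = {0..<1 - y}" unfolding S1_def using d1 by auto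
      show ?thesis unfolding e1 e2 d1 using y
        by (simp add: ennreal_plus[symmetric] del: ennreal_plus)
    qed
  next
    case False
    have e1: "S1 = {}" unfolding S1_def using False by auto
    have e2: "S2 = {1 - y..1 + \<delta> - y}" unfolding S2_def using False d by auto
    show ?thesis unfolding e1 e2 using False d by simp
  qed
  ultimately show ?thesis unfolding S by simp
qed

lemma averaging:
  fixes \<gamma> :: "real measure"
  assumes g: "prob_space \<gamma>" "sets \<gamma> = sets borel" and d: "0 \<le> \<delta>" "\<delta> \<le> 1"
    and E: "\<And>t. t \<in> {0..1} \<Longrightarrow>
      \<bar>measure \<gamma> ((\<lambda>x. x + t) -` {x. frac x \<le> \<delta>}) - measure \<gamma> {x. frac x \<le> \<delta>}\<bar> \<le> E"
  shows "\<bar>measure \<gamma> {x. frac x \<le> \<delta>} - \<delta>\<bar> \<le> E"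
proof -
  interpret G: prob_space \<gamma> by fact
  interpret P: pair_sigma_finite lborel \<gamma>
    unfolding pair_sigma_finite_def
    using lborel.sigma_finite_measure_axioms prob_space_imp_sigma_finite[OF g(1)] by auto
  let ?A = "{x::real. frac x \<le> \<delta>}"
  define p where "p = measure \<gamma> ?A"
  have E0: "0 \<le> E" using E[of 0] by (auto intro: order.trans[OF abs_ge_zero])
  have sg: "sets (lborel \<Otimes>\<^sub>M \<gamma>) = sets (borel \<Otimes>\<^sub>M borel)"
    by (intro sets_pair_measure_cong) (auto simp: g)
  have fm: "(\<lambda>(t, x). indicator {0..1} t * indicator ?A (x + t) :: ennreal) \<in> borel_measurable (lborel \<Otimes>\<^sub>M \<gamma>)"
  proof -
    have "(\<lambda>(t, x). indicator {0..1} t * indicator ?A (x + t) :: ennreal) \<in> borel_measurable (borel \<Otimes>\<^sub>M borel)"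
      by measurable
    then show ?thesis unfolding measurable_cong_sets[OF sg refl] .
  qed
  have key: "(\<integral>\<^sup>+t. indicator {0..1} t * emeasure \<gamma> ((\<lambda>x. x + t) -` ?A) \<partial>lborel) = ennreal \<delta>"
  proof -
    have "(\<integral>\<^sup>+t. indicator {0..1} t * emeasure \<gamma> ((\<lambda>x. x + t) -` ?A) \<partial>lborel)
        = (\<integral>\<^sup>+t. (\<integral>\<^sup>+x. indicator {0..1} t * indicator ?A (x + t) \<partial>\<gamma>) \<partial>lborel)"
    proof (intro nn_integral_cong)
      fix t :: real
      have m: "(\<lambda>x. x + t) -` ?A \<in> sets \<gamma>" using g(2) by simp (measurable)
      have "(\<integral>\<^sup>+x. indicator {0..1} t * indicator ?A (x + t) \<partial>\<gamma>) = indicator {0..1} t * (\<integral>\<^sup>+x. indicator ((\<lambda>x. x + t) -` ?A) x \<partial>\<gamma>)"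
        by (subst nn_integral_cmult[symmetric]) (auto intro!: nn_integral_cong simp: indicator_def measurable_cong_sets[OF g(2) refl])
      also have "\<dots> = indicator {0..1} t * emeasure \<gamma> ((\<lambda>x. x + t) -` ?A)"
        using m by simp
      finally show "indicator {0..1} t * emeasure \<gamma> ((\<lambda>x. x + t) -` ?A) = (\<integral>\<^sup>+x. indicator {0..1} t * indicator ?A (x + t) \<partial>\<gamma>)" by simp
    qed
    also have "\<dots> = (\<integral>\<^sup>+x. (\<integral>\<^sup>+t. indicator {0..1} t * indicator ?A (x + t) \<partial>lborel) \<partial>\<gamma>)"
      using P.Fubini'[of "\<lambda>t x. indicator {0..1} t * indicator ?A (x + t)"] fm by simp
    also have "\<dots> = (\<integral>\<^sup>+x. ennreal \<delta> \<partial>\<gamma>)"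
    proof (intro nn_integral_cong)
      fix x :: real
      have "(\<integral>\<^sup>+t. indicator {0..1} t * indicator ?A (x + t) \<partial>lborel) = (\<integral>\<^sup>+t. indicator {t\<in>{0..1}. frac (x + t) \<le> \<delta>} t \<partial>lborel)"
        by (intro nn_integral_cong) (auto simp: indicator_def)
      also have "\<dots> = emeasure lborel {t\<in>{0..1}. frac (x + t) \<le> \<delta>}"
        by (intro nn_integral_indicator) measurable
      also have "\<dots> = ennreal \<delta>" by (rule frac_shift_measure[OF d])
      finally show "(\<integral>\<^sup>+t. indicator {0..1} t * indicator ?A (x + t) \<partial>lborel) = ennreal \<delta>" .
    qed
    also have "\<dots> = ennreal \<delta>" by (simp add: G.emeasure_space_1)
    finally show ?thesis .
  qed
  have up: "(\<integral>\<^sup>+t. indicator {0..1} t * emeasure \<gamma> ((\<lambda>x. x + t) -` ?A) \<partial>lborel) \<le> ennreal (p + E)"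
  proof -
    have "(\<integral>\<^sup>+t. indicator {0..1} t * emeasure \<gamma> ((\<lambda>x. x + t) -` ?A) \<partial>lborel) \<le> (\<integral>\<^sup>+t. ennreal (p + E) * indicator {0..1::real} t \<partial>lborel)"
    proof (rule nn_integral_mono)
      fix t :: real assume "t \<in> space lborel"
      show "indicator {0..1} t * emeasure \<gamma> ((\<lambda>x. x + t) -` ?A) \<le> ennreal (p + E) * indicator {0..1} t"
      proof (cases "t \<in> {0..1}")
        case True
        have "measure \<gamma> ((\<lambda>x. x + t) -` ?A) \<le> p + E" using E[OF True] unfolding p_def by (simp add: abs_le_iff)
        then show ?thesis using True by (simp add: G.emeasure_eq_measure ennreal_leI)
      qed simp
    qed
    also have "\<dots> = ennreal (p + E)" by (simp add: nn_integral_cmult_indicator)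
    finally show ?thesis .
  qed
  have lo: "ennreal (p - E) \<le> (\<integral>\<^sup>+t. indicator {0..1} t * emeasure \<gamma> ((\<lambda>x. x + t) -` ?A) \<partial>lborel)"
  proof -
    have "(\<integral>\<^sup>+t. ennreal (p - E) * indicator {0..1::real} t \<partial>lborel) \<le> (\<integral>\<^sup>+t. indicator {0..1} t * emeasure \<gamma> ((\<lambda>x. x + t) -` ?A) \<partial>lborel)"
    proof (rule nn_integral_mono)
      fix t :: real assume "t \<in> space lborel"
      show "ennreal (p - E) * indicator {0..1} t \<le> indicator {0..1} t * emeasure \<gamma> ((\<lambda>x. x + t) -` ?A)"
      proof (cases "t \<in> {0..1}")
        case True
        have "p - E \<le> measure \<gamma> ((\<lambda>x. x + t) -` ?A)" using E[OF True] unfolding p_def by (simp add: abs_le_iff)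
        then show ?thesis using True by (simp add: G.emeasure_eq_measure ennreal_leI)
      qed simp
    qed
    moreover have "(\<integral>\<^sup>+t. ennreal (p - E) * indicator {0..1::real} t \<partial>lborel) = ennreal (p - E)"
      by (simp add: nn_integral_cmult_indicator)
    ultimately show ?thesis by simp
  qed
  have p0: "0 \<le> p" unfolding p_def by simp
  have "ennreal \<delta> \<le> ennreal (p + E)" using up key by simp
  then have "\<delta> \<le> p + E" using p0 E0 by (simp add: ennreal_le_iff del: ennreal_plus)
  moreover have "p - E \<le> \<delta>"
  proof (cases "p - E \<le> 0")
    case True then show ?thesis using d by simp
  next
    case False then show ?thesis using lo key d by (simp add: ennreal_le_iff)
  qed
  ultimately show ?thesis unfolding p_def by (simp add: abs_le_iff)
qed

lemma pair_measure_eq: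
  fixes \<nu> \<rho> :: "real measure"
  assumes "prob_space \<nu>" "sets \<nu> = sets borel" "prob_space \<rho>" "sets \<rho> = sets borel"
    "S \<in> sets (borel \<Otimes>\<^sub>M borel)"
  shows "(\<lambda>w. measure \<rho> (Pair w -` S)) \<in> borel_measurable borel"
    "measure (\<nu> \<Otimes>\<^sub>M \<rho>) S = (\<integral>w. measure \<rho> (Pair w -` S) \<partial>\<nu>)"
proof -
  interpret N: prob_space \<nu> by fact
  interpret R: prob_space \<rho> by fact
  have S1: "S \<in> sets (borel \<Otimes>\<^sub>M \<rho>)"
    by (subst sets_pair_measure_cong[OF refl assms(4)]) (rule assms(5))
  have S2: "S \<in> sets (\<nu> \<Otimes>\<^sub>M \<rho>)"
    by (subst sets_pair_measure_cong[OF assms(2) assms(4)]) (rule assms(5))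
  have "(\<lambda>w. emeasure \<rho> (Pair w -` S)) \<in> borel_measurable borel"
    by (rule R.measurable_emeasure_Pair[OF S1])
  then have m: "(\<lambda>w. enn2real (emeasure \<rho> (Pair w -` S))) \<in> borel_measurable borel" by measurable
  then show m': "(\<lambda>w. measure \<rho> (Pair w -` S)) \<in> borel_measurable borel" by (simp add: measure_def)
  have m\<nu>: "(\<lambda>w. measure \<rho> (Pair w -` S)) \<in> borel_measurable \<nu>"
    by (subst measurable_cong_sets[OF assms(2) refl]) (rule m')
  have int: "integrable \<nu> (\<lambda>w. measure \<rho> (Pair w -` S))"
    by (rule N.integrable_const_bound[where B=1]) (auto simp: m\<nu>)
  have "emeasure (\<nu> \<Otimes>\<^sub>M \<rho>) S = (\<integral>\<^sup>+w. emeasure \<rho> (Pair w -` S) \<partial>\<nu>)"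
    by (rule R.emeasure_pair_measure_alt[OF S2])
  also have "\<dots> = (\<integral>\<^sup>+w. ennreal (measure \<rho> (Pair w -` S)) \<partial>\<nu>)"
    by (simp add: R.emeasure_eq_measure)
  also have "\<dots> = ennreal (\<integral>w. measure \<rho> (Pair w -` S) \<partial>\<nu>)"
    by (rule nn_integral_eq_integral[OF int]) auto
  finally show "measure (\<nu> \<Otimes>\<^sub>M \<rho>) S = (\<integral>w. measure \<rho> (Pair w -` S) \<partial>\<nu>)"
    by (simp add: measure_def)
qed

lemma (in prob_space) hybrid_step:
  fixes Zk W :: "'a \<Rightarrow> real"
  assumes ind: "indep_var borel W borel Zk" and d: "distr M borel Zk = \<rho>" and tv: "tvle \<rho> t e"
    and A: "A \<in> sets borel"
  shows "\<bar>prob {x\<in>space M. max (Zk x + t) (W x) \<in> A} - prob {x\<in>space M. max (Zk x) (W x) \<in> A}\<bar> \<le> e"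
proof -
  have rW: "random_variable borel W" and rZ: "random_variable borel Zk"
    using ind by (auto dest: indep_var_rv1 indep_var_rv2)
  let ?\<nu> = "distr M borel W"
  have \<nu>: "prob_space ?\<nu>" "sets ?\<nu> = sets borel" using rW by (auto intro: prob_space_distr)
  have \<rho>: "prob_space \<rho>" "sets \<rho> = sets borel" using rZ d[symmetric] by (auto intro: prob_space_distr)
  have joint: "distr M (borel \<Otimes>\<^sub>M borel) (\<lambda>x. (W x, Zk x)) = ?\<nu> \<Otimes>\<^sub>M \<rho>"
    using ind unfolding indep_var_distribution_eq d by simp
  define S where "S c = {(w::real, z::real). max (z + c) w \<in> A}" for c
  have Sm: "S c \<in> sets (borel \<Otimes>\<^sub>M borel)" for c
  proof -
    have "(\<lambda>p::real\<times>real. max (snd p + c) (fst p)) \<in> borel_measurable (borel \<Otimes>\<^sub>M borel)" by measurable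
    from measurable_sets[OF this A] have "{p::real\<times>real. max (snd p + c) (fst p) \<in> A} \<in> sets (borel \<Otimes>\<^sub>M borel)"
      by (simp add: space_pair_measure vimage_def)
    moreover have "S c = {p::real\<times>real. max (snd p + c) (fst p) \<in> A}" unfolding S_def by auto
    ultimately show ?thesis by simp
  qed
  have P: "prob {x\<in>space M. max (Zk x + c) (W x) \<in> A} = (\<integral>w. measure \<rho> (Pair w -` S c) \<partial>?\<nu>)" for c
  proof -
    have rv: "(\<lambda>x. (W x, Zk x)) \<in> measurable M (borel \<Otimes>\<^sub>M borel)" using rW rZ by measurable
    have "prob {x\<in>space M. max (Zk x + c) (W x) \<in> A} = prob ((\<lambda>x. (W x, Zk x)) -` S c \<inter> space M)"
      unfolding S_def by (intro arg_cong[where f=prob]) auto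
    also have "\<dots> = measure (distr M (borel \<Otimes>\<^sub>M borel) (\<lambda>x. (W x, Zk x))) (S c)"
      by (rule measure_distr[OF rv Sm, symmetric])
    also have "\<dots> = (\<integral>w. measure \<rho> (Pair w -` S c) \<partial>?\<nu>)"
      unfolding joint by (rule pair_measure_eq(2)[OF \<nu> \<rho> Sm])
    finally show ?thesis .
  qed
  have fm: "(\<lambda>w. measure \<rho> (Pair w -` S c)) \<in> borel_measurable ?\<nu>" for c
    by (subst measurable_cong_sets[OF \<nu>(2) refl]) (rule pair_measure_eq(1)[OF \<nu> \<rho> Sm])
  interpret N: prob_space ?\<nu> by (rule \<nu>(1))
  have int: "integrable ?\<nu> (\<lambda>w. measure \<rho> (Pair w -` S c))" for c
    by (rule N.integrable_const_bound[where B=1])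
       (use pair_measure_eq(1)[OF \<nu> \<rho> Sm] prob_space.prob_le_1[OF \<rho>(1)] in auto)
  have bd: "\<bar>measure \<rho> (Pair w -` S t) - measure \<rho> (Pair w -` S 0)\<bar> \<le> e" for w
  proof -
    have B: "{z::real. max z w \<in> A} \<in> sets borel"
    proof -
      have "(\<lambda>z::real. max z w) \<in> borel_measurable borel" by measurable
      from measurable_sets[OF this A] show ?thesis by (simp add: vimage_def)
    qed
    have "Pair w -` S t = (\<lambda>z. z + t) -` {z. max z w \<in> A}" "Pair w -` S 0 = {z. max z w \<in> A}"
      unfolding S_def by auto
    then show ?thesis using tv B unfolding tvle_def by auto
  qed
  have "\<bar>(\<integral>w. measure \<rho> (Pair w -` S t) \<partial>?\<nu>) - (\<integral>w. measure \<rho> (Pair w -` S 0) \<partial>?\<nu>)\<bar>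
      = \<bar>\<integral>w. measure \<rho> (Pair w -` S t) - measure \<rho> (Pair w -` S 0) \<partial>?\<nu>\<bar>"
    using int by simp
  also have "\<dots> \<le> (\<integral>w. \<bar>measure \<rho> (Pair w -` S t) - measure \<rho> (Pair w -` S 0)\<bar> \<partial>?\<nu>)"
    by (rule integral_abs_bound)
  also have "\<dots> \<le> (\<integral>w. e \<partial>?\<nu>)"
    by (rule integral_mono) (use int bd in auto)
  also have "\<dots> = e" using N.prob_space by simp
  finally show ?thesis using P[of t] P[of 0] by simp
qed

lemma (in prob_space) hybrid:
  fixes Z :: "nat \<Rightarrow> 'a \<Rightarrow> real"
  assumes ind: "indep_vars (\<lambda>_. borel) Z {1..m}" and m: "m \<ge> 1"
    and d: "\<And>i. i \<in> {1..m} \<Longrightarrow> distr M borel (Z i) = \<rho>" and tv: "tvle \<rho> t e" and A: "A \<in> sets borel"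
  shows "\<bar>prob {x\<in>space M. Max ((\<lambda>i. Z i x) ` {1..m}) + t \<in> A}
          - prob {x\<in>space M. Max ((\<lambda>i. Z i x) ` {1..m}) \<in> A}\<bar> \<le> m * e"
proof -
  define H where "H k x = Max ((\<lambda>i. Z i x + (if i \<le> k then t else 0)) ` {1..m})" for k x
  have rv: "\<And>i. i \<in> {1..m} \<Longrightarrow> random_variable borel (Z i)"
    using ind unfolding indep_vars_def by auto
  have H0: "H 0 x = Max ((\<lambda>i. Z i x) ` {1..m})" for x
    unfolding H_def by (intro arg_cong[where f=Max] image_cong) auto
  have Hm: "H m x = Max ((\<lambda>i. Z i x) ` {1..m}) + t" for x
  proof -
    have "H m x = Max ((\<lambda>y. y + t) ` ((\<lambda>i. Z i x) ` {1..m}))"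
      unfolding H_def image_image by (intro arg_cong[where f=Max] image_cong) auto
    also have "\<dots> = Max ((\<lambda>i. Z i x) ` {1..m}) + t"
      using m by (intro mono_Max_commute[symmetric]) (auto simp: mono_def)
    finally show ?thesis .
  qed
  have step: "\<bar>prob {x\<in>space M. H (Suc k) x \<in> A} - prob {x\<in>space M. H k x \<in> A}\<bar> \<le> e" if k: "k < m" for k
  proof -
    define j where "j = Suc k"
    have j: "j \<in> {1..m}" using k unfolding j_def by auto
    define B where "B = {1..m} - {j}"
    have ins: "{1..m} = insert j B" "j \<notin> B" "finite B" using j unfolding B_def by auto
    show ?thesis
    proof (cases "B = {}")
      case True
      have e1: "H (Suc k) x = Z j x + t" for x
        unfolding H_def ins(1) True j_def by simp
      have e2: "H k x = Z j x" for x
        unfolding H_def ins(1) True j_def by simp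
      have p: "prob {x\<in>space M. Z j x + c \<in> A} = measure \<rho> ((\<lambda>z. z + c) -` A)" for c
      proof -
        have "prob {x\<in>space M. Z j x + c \<in> A} = prob (Z j -` ((\<lambda>z. z + c) -` A) \<inter> space M)"
          by (intro arg_cong[where f=prob]) auto
        also have "\<dots> = measure (distr M borel (Z j)) ((\<lambda>z. z + c) -` A)"
          by (rule measure_distr[symmetric]) (use rv[OF j] shift_sets[OF A] in auto)
        finally show ?thesis using d[OF j] by simp
      qed
      show ?thesis unfolding e1 e2 using p[of t] p[of 0] tv A unfolding tvle_def by auto
    next
      case False
      define s where "s i = (if i \<le> k then t else 0)" for i
      define W where "W x = Max ((\<lambda>i. Z i x + s i) ` B)" for x
      have e1: "H (Suc k) x = max (Z j x + t) (W x)" for x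
      proof -
        have "H (Suc k) x = Max (insert (Z j x + t) ((\<lambda>i. Z i x + s i) ` B))"
          unfolding H_def ins(1) image_insert j_def s_def
          using ins(2) unfolding j_def by (intro arg_cong[where f=Max] arg_cong2[where f=insert] image_cong) (auto simp: le_Suc_eq)
        then show ?thesis unfolding W_def using ins(3) False by (simp add: Max_insert)
      qed
      have e2: "H k x = max (Z j x) (W x)" for x
      proof -
        have "H k x = Max (insert (Z j x) ((\<lambda>i. Z i x + s i) ` B))"
          unfolding H_def ins(1) image_insert j_def s_def
          using ins(2) unfolding j_def by (intro arg_cong[where f=Max] arg_cong2[where f=insert] image_cong) (auto simp: le_Suc_eq)
        then show ?thesis unfolding W_def using ins(3) False by (simp add: Max_insert)
      qed
      have iv: "indep_var (Pi\<^sub>M B (\<lambda>_. borel)) (\<lambda>\<omega>. restrict (\<lambda>i. Z i \<omega>) B) (Pi\<^sub>M {j} (\<lambda>_. borel)) (\<lambda>\<omega>. restrict (\<lambda>i. Z i \<omega>) {j})"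
        by (rule indep_var_restrict[OF ind]) (use j in \<open>auto simp: B_def\<close>)
      have "indep_var borel ((\<lambda>f. Max ((\<lambda>i. f i + s i) ` B)) \<circ> (\<lambda>\<omega>. restrict (\<lambda>i. Z i \<omega>) B))
                      borel ((\<lambda>f. f j) \<circ> (\<lambda>\<omega>. restrict (\<lambda>i. Z i \<omega>) {j}))"
        by (rule indep_var_compose[OF iv]) (use ins(3) in measurable)
      moreover have "(\<lambda>f. Max ((\<lambda>i. f i + s i) ` B)) \<circ> (\<lambda>\<omega>. restrict (\<lambda>i. Z i \<omega>) B) = W"
        unfolding W_def by (auto intro!: ext arg_cong[where f=Max] image_cong)
      moreover have "(\<lambda>f. f j) \<circ> (\<lambda>\<omega>. restrict (\<lambda>i. Z i \<omega>) {j}) = Z j"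
        by (auto intro!: ext)
      ultimately have ivW: "indep_var borel W borel (Z j)" by simp
      show ?thesis unfolding e1 e2 by (rule hybrid_step[OF ivW d[OF j] tv A])
    qed
  qed
  have tel: "\<bar>prob {x\<in>space M. H k x \<in> A} - prob {x\<in>space M. H 0 x \<in> A}\<bar> \<le> k * e" if "k \<le> m" for k
    using that
  proof (induction k)
    case 0 then show ?case by simp
  next
    case (Suc k)
    then have "\<bar>prob {x\<in>space M. H k x \<in> A} - prob {x\<in>space M. H 0 x \<in> A}\<bar> \<le> k * e" by simp
    moreover have "\<bar>prob {x\<in>space M. H (Suc k) x \<in> A} - prob {x\<in>space M. H k x \<in> A}\<bar> \<le> e"
      using step Suc(2) by simp
    ultimately show ?case by (simp add: algebra_simps abs_le_iff)
  qed
  show ?thesis using tel[of m] unfolding H0 Hm by simp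
qed

lemma (in prob_space) row_law:
  fixes X :: "nat \<times> nat \<Rightarrow> 'a \<Rightarrow> real"
  assumes ind: "indep_vars (\<lambda>_. borel) X ({1..m} \<times> {1..})"
    and d: "\<And>p. p \<in> {1..m} \<times> {1..} \<Longrightarrow> distr M borel (X p) = U"
    and U: "prob_space U" "sets U = sets borel"
    and i: "i \<in> {1..m}"
  shows "finite J \<Longrightarrow> J \<subseteq> {1..} \<Longrightarrow> distr M borel (\<lambda>x. \<Sum>j\<in>J. X (i, j) x) = cpow U (card J)"
proof (induction J rule: finite_induct)
  case empty then show ?case by simp
next
  case (insert j J)
  have rv: "\<And>p. p \<in> {1..m} \<times> {1..} \<Longrightarrow> random_variable borel (X p)"
    using ind unfolding indep_vars_def by auto
  have sub: "insert (i, j) ((\<lambda>j. (i, j)) ` J) \<subseteq> {1..m} \<times> {1..}" using insert i by auto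
  have iv: "indep_var borel (X (i, j)) borel (\<lambda>\<omega>. \<Sum>p\<in>(\<lambda>j. (i, j)) ` J. X p \<omega>)"
    by (rule indep_vars_sum) (use insert in \<open>auto intro: indep_vars_subset[OF ind sub]\<close>)
  have re: "(\<Sum>p\<in>(\<lambda>j. (i, j)) ` J. X p \<omega>) = (\<Sum>j\<in>J. X (i, j) \<omega>)" for \<omega>
    by (subst sum.reindex) (auto simp: inj_on_def)
  have iv': "indep_var borel (X (i, j)) borel (\<lambda>\<omega>. \<Sum>j\<in>J. X (i, j) \<omega>)" using iv unfolding re .
  have r1: "random_variable borel (X (i, j))" using rv insert i by auto
  have r2: "random_variable borel (\<lambda>\<omega>. \<Sum>j\<in>J. X (i, j) \<omega>)"
    using rv insert i by (intro borel_measurable_sum) auto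
  have "distr M borel (\<lambda>x. \<Sum>j\<in>insert j J. X (i, j) x) = distr M borel (\<lambda>x. X (i, j) x + (\<Sum>j\<in>J. X (i, j) x))"
    using insert by simp
  also have "\<dots> = (distr M borel (X (i, j)) \<star> distr M borel (\<lambda>\<omega>. \<Sum>j\<in>J. X (i, j) \<omega>))"
    by (rule sum_indep_random_variable[OF iv' r1 r2])
  also have "\<dots> = (U \<star> cpow U (card J))" using insert d[of "(i,j)"] i by simp
  finally show ?case using insert by simp
qed

lemma (in prob_space) rows_indep:
  fixes X :: "nat \<times> nat \<Rightarrow> 'a \<Rightarrow> real"
  assumes ind: "indep_vars (\<lambda>_. borel) X ({1..m} \<times> {1..})"
  shows "indep_vars (\<lambda>_. borel) (\<lambda>i x. \<Sum>j\<in>{1..n}. X (i, j) x) {1..m}"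
proof -
  define K where "K i = {i} \<times> {1..n}" for i :: nat
  have "indep_vars (\<lambda>i. Pi\<^sub>M (K i) (\<lambda>_. borel)) (\<lambda>i \<omega>. restrict (\<lambda>p. X p \<omega>) (K i)) {1..m}"
    by (rule indep_vars_restrict[OF ind]) (auto simp: K_def disjoint_family_on_def)
  then have "indep_vars (\<lambda>_. borel) (\<lambda>i \<omega>. (\<lambda>f. \<Sum>j\<in>{1..n}. f (i, j)) (restrict (\<lambda>p. X p \<omega>) (K i))) {1..m}"
    by (rule indep_vars_compose2) (auto simp: K_def)
  moreover have "(\<lambda>\<omega>. (\<lambda>f. \<Sum>j\<in>{1..n}. f (i, j)) (restrict (\<lambda>p. X p \<omega>) (K i))) = (\<lambda>x. \<Sum>j\<in>{1..n}. X (i, j) x)" for i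
    by (auto simp: K_def intro!: ext sum.cong)
  ultimately show ?thesis by simp
qed

lemma (in prob_space) max_frac_limit:
  fixes X :: "nat \<times> nat \<Rightarrow> 'a \<Rightarrow> real" and a b \<delta> :: real
  assumes ind: "indep_vars (\<lambda>_. borel) X ({1..m} \<times> {1..})" and m: "m \<ge> 1"
    and d: "\<And>p. p \<in> {1..m} \<times> {1..} \<Longrightarrow> distr M borel (X p) = uniform_measure lborel {a<..<b}"
    and ab: "a < b" and \<delta>: "0 \<le> \<delta>" "\<delta> \<le> 1"
  shows "(\<lambda>n. prob {x\<in>space M. frac (Max ((\<lambda>i. \<Sum>j\<in>{1..n}. X (i, j) x) ` {1..m})) \<le> \<delta>}) \<longlonglongrightarrow> \<delta>"
proof (rule LIMSEQ_I)
  fix r :: real assume r: "0 < r"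
  let ?U = "uniform_measure lborel {a<..<b}"
  have U: "prob_space ?U" "sets ?U = sets borel" using U_rprob[OF ab refl] by auto
  have "r / 2 / m > 0" using r m by simp
  then obtain N where N: "\<forall>n\<ge>N. \<forall>t\<in>{0..1}. tvle (cpow ?U n) t (r / 2 / m)"
    using tv_decay[OF ab refl, of "r/2/m"] by blast
  show "\<exists>no. \<forall>n\<ge>no. norm (prob {x\<in>space M. frac (Max ((\<lambda>i. \<Sum>j\<in>{1..n}. X (i, j) x) ` {1..m})) \<le> \<delta>} - \<delta>) < r"
  proof (intro exI allI impI)
    fix n assume n: "N \<le> n"
    define Z where "Z i x = (\<Sum>j\<in>{1..n}. X (i, j) x)" for i x
    define G where "G x = Max ((\<lambda>i. Z i x) ` {1..m})" for x
    have indZ: "indep_vars (\<lambda>_. borel) Z {1..m}" unfolding Z_def by (rule rows_indep[OF ind])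
    have dZ: "distr M borel (Z i) = cpow ?U n" if "i \<in> {1..m}" for i
      using row_law[OF ind d U that, of "{1..n}"] unfolding Z_def by auto
    have rvZ: "\<And>i. i \<in> {1..m} \<Longrightarrow> random_variable borel (Z i)"
      using indZ unfolding indep_vars_def by auto
    have rvG: "random_variable borel G" unfolding G_def using rvZ by (intro borel_measurable_Max) auto
    let ?\<gamma> = "distr M borel G"
    have \<gamma>: "prob_space ?\<gamma>" "sets ?\<gamma> = sets borel" using rvG by (auto intro: prob_space_distr)
    let ?A = "{x::real. frac x \<le> \<delta>}"
    have Am: "?A \<in> sets borel" by (rule frac_set_sets)
    have mg: "measure ?\<gamma> S = prob {x\<in>space M. G x \<in> S}" if "S \<in> sets borel" for S
      using that rvG by (subst measure_distr) (auto intro!: arg_cong[where f=prob])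
    have E: "\<bar>measure ?\<gamma> ((\<lambda>x. x + t) -` ?A) - measure ?\<gamma> ?A\<bar> \<le> r / 2" if t: "t \<in> {0..1}" for t
    proof -
      have "\<bar>prob {x\<in>space M. G x + t \<in> ?A} - prob {x\<in>space M. G x \<in> ?A}\<bar> \<le> m * (r / 2 / m)"
        unfolding G_def by (rule hybrid[OF indZ m dZ N[rule_format, OF n t] Am])
      also have "\<dots> = r / 2" using m by simp
      finally show ?thesis using mg[OF Am] mg[OF shift_sets[OF Am, of t]] by simp
    qed
    have "\<bar>measure ?\<gamma> ?A - \<delta>\<bar> \<le> r / 2" by (rule averaging[OF \<gamma> \<delta> E])
    then have "\<bar>prob {x\<in>space M. frac (G x) \<le> \<delta>} - \<delta>\<bar> \<le> r / 2" using mg[OF Am] by simp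
    then show "norm (prob {x\<in>space M. frac (Max ((\<lambda>i. \<Sum>j\<in>{1..n}. X (i, j) x) ` {1..m})) \<le> \<delta>} - \<delta>) < r"
      using r unfolding G_def Z_def by simp
  qed
qed

lemma sig_eq:
  fixes B y :: real assumes B: "B > 1"
  shows "significand B y = B powr frac (log B y)"
  unfolding significand_def
proof (rule the_equality)
  let ?L = "log B y"
  show "1 \<le> B powr frac ?L \<and> B powr frac ?L < B \<and> ?L - log B (B powr frac ?L) \<in> \<int>"
  proof (intro conjI)
    show "1 \<le> B powr frac ?L" using B by (intro ge_one_powr_ge_zero) auto
    have "B powr frac ?L < B powr 1" using B frac_lt_1[of ?L] by (intro powr_less_mono) auto
    then show "B powr frac ?L < B" using B by simp
    have "?L - log B (B powr frac ?L) = of_int \<lfloor>?L\<rfloor>" using B by (simp add: frac_def)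
    then show "?L - log B (B powr frac ?L) \<in> \<int>" by simp
  qed
next
  fix s assume s: "1 \<le> s \<and> s < B \<and> log B y - log B s \<in> \<int>"
  have s0: "s > 0" using s by auto
  have "0 \<le> log B s" using s B by simp
  moreover have "log B s < 1" using s B s0 by simp
  ultimately have "frac (log B y) = log B s" using s by (simp add: frac_unique_iff)
  then show "s = B powr frac (log B y)" using B s0 by simp
qed

lemma sig_le_iff:
  fixes B y D :: real assumes B: "B > 1" and D: "D \<ge> 1"
  shows "significand B y \<le> D \<longleftrightarrow> frac (log B y) \<le> log B D"
  unfolding sig_eq[OF B] using le_log_iff[OF B, of D "frac (log B y)"] D by simp

lemma log_Max:
  fixes B :: real and f :: "nat \<Rightarrow> real"
  assumes B: "B > 1" and I: "finite I" "I \<noteq> {}" and pos: "\<And>i. i \<in> I \<Longrightarrow> f i > 0"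
  shows "log B (Max (f ` I)) = Max ((\<lambda>i. log B (f i)) ` I)"
proof -
  have "Max (f ` I) \<in> f ` I" using I by (intro Max_in) auto
  then obtain i0 where i0: "i0 \<in> I" "Max (f ` I) = f i0" by blast
  have le: "f i \<le> f i0" if "i \<in> I" for i using i0 that I by (metis Max_ge finite_imageI image_eqI)
  show ?thesis unfolding i0(2)
  proof (rule Max_eqI[symmetric])
    show "finite ((\<lambda>i. log B (f i)) ` I)" using I by simp
    show "log B (f i0) \<in> (\<lambda>i. log B (f i)) ` I" using i0 by auto
    fix y assume "y \<in> (\<lambda>i. log B (f i)) ` I"
    then obtain i where "i \<in> I" "y = log B (f i)" by auto
    then show "y \<le> log B (f i0)" using le pos B i0 by simp
  qed
qed

lemma log_prod':
  fixes B :: real and f :: "nat \<Rightarrow> real"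
  assumes B: "B > 1" and J: "finite J" and pos: "\<And>j. j \<in> J \<Longrightarrow> f j > 0"
  shows "log B (\<Prod>j\<in>J. f j) = (\<Sum>j\<in>J. log B (f j))"
proof -
  have "ln (prod f J) = (\<Sum>x\<in>J. ln (f x))" by (rule ln_prod[OF J]) (use pos in force)
  then show ?thesis unfolding log_def by (simp add: sum_divide_distrib)
qed

lemma distr_lborel_borel:
  assumes "f \<in> borel_measurable M"
  shows "distr M lborel f = distr M borel f"
  by (rule measure_eqI) (use assms in \<open>auto simp: emeasure_distr\<close>)

theorem theorem1p9:
  fixes M :: "'a measure" and B a b :: real and m :: nat
    and P :: "nat \<Rightarrow> nat \<Rightarrow> 'a \<Rightarrow> real"
  assumes "prob_space M"
    and "B > 1" and "m \<ge> 1" and "a < b" and "b \<le> 0"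
    and "prob_space.indep_vars M (\<lambda>_. borel) (\<lambda>(i, j). P i j) ({1..m} \<times> {1..})"
    and "\<And>i j. i \<in> {1..m} \<Longrightarrow> j \<ge> 1 \<Longrightarrow> AE x in M. P i j x > 0"
    and "\<And>i j. i \<in> {1..m} \<Longrightarrow> j \<ge> 1 \<Longrightarrow>
           distr M lborel (\<lambda>x. log B (P i j x)) = uniform_measure lborel {a<..<b}"
  shows "strong_benford M B (\<lambda>n x. Max ((\<lambda>i. \<Prod>j=1..n. P i j x) ` {1..m}))"
proof -
  interpret prob_space M by fact
  note B = assms(2) and m = assms(3) and ab = assms(4)
  define X where "X p x = log B ((\<lambda>(i, j). P i j) p x)" for p x
  have ind0: "indep_vars (\<lambda>_. borel) (\<lambda>(i, j). P i j) ({1..m} \<times> {1..})" using assms(6) .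
  have indX: "indep_vars (\<lambda>_. borel) X ({1..m} \<times> {1..})"
    unfolding X_def by (rule indep_vars_compose2[OF ind0]) measurable
  have rvP: "\<And>i j. (i, j) \<in> {1..m} \<times> {1..} \<Longrightarrow> random_variable borel (P i j)"
    using ind0 unfolding indep_vars_def by auto
  have dX: "distr M borel (X p) = uniform_measure lborel {a<..<b}" if p: "p \<in> {1..m} \<times> {1..}" for p
  proof -
    obtain i j where ij: "p = (i, j)" "i \<in> {1..m}" "j \<ge> 1" using p by auto
    have "X p = (\<lambda>x. log B (P i j x))" unfolding X_def ij by simp
    moreover have "(\<lambda>x. log B (P i j x)) \<in> borel_measurable M"
    proof -
      have [measurable]: "P i j \<in> borel_measurable M" using rvP[of i j] ij by auto
      show ?thesis by measurable
    qed
    ultimately show ?thesis using assms(8)[OF ij(2,3)] distr_lborel_borel by metis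
  qed
  show ?thesis unfolding strong_benford_def
  proof
    fix D assume D: "D \<in> {1..B}"
    define \<delta> where "\<delta> = log B D"
    have \<delta>: "0 \<le> \<delta>" "\<delta> \<le> 1" unfolding \<delta>_def using D B by auto
    have lim: "(\<lambda>n. prob {x\<in>space M. frac (Max ((\<lambda>i. \<Sum>j\<in>{1..n}. X (i, j) x) ` {1..m})) \<le> \<delta>}) \<longlonglongrightarrow> \<delta>"
      by (rule max_frac_limit[OF indX m dX ab \<delta>])
    have eq: "measure M {x \<in> space M. significand B (Max ((\<lambda>i. \<Prod>j=1..n. P i j x) ` {1..m})) \<le> D}
        = prob {x\<in>space M. frac (Max ((\<lambda>i. \<Sum>j\<in>{1..n}. X (i, j) x) ` {1..m})) \<le> \<delta>}" for n
    proof -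
      have set1: "{x \<in> space M. significand B (Max ((\<lambda>i. \<Prod>j=1..n. P i j x) ` {1..m})) \<le> D}
          = {x \<in> space M. frac (log B (Max ((\<lambda>i. \<Prod>j=1..n. P i j x) ` {1..m}))) \<le> \<delta>}"
        unfolding \<delta>_def using sig_le_iff[OF B] D by auto
      have AEpos: "AE x in M. \<forall>p\<in>{1..m} \<times> {1..n}. P (fst p) (snd p) x > 0"
        by (rule AE_finite_allI) (auto intro: assms(7))
      have AEeq: "AE x in M. (x \<in> {x \<in> space M. frac (log B (Max ((\<lambda>i. \<Prod>j=1..n. P i j x) ` {1..m}))) \<le> \<delta>})
          \<longleftrightarrow> (x \<in> {x\<in>space M. frac (Max ((\<lambda>i. \<Sum>j\<in>{1..n}. X (i, j) x) ` {1..m})) \<le> \<delta>})"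
      proof (rule AE_mp[OF AEpos], intro AE_I2 impI)
        fix x assume pos: "\<forall>p\<in>{1..m} \<times> {1..n}. P (fst p) (snd p) x > 0"
        have "log B (Max ((\<lambda>i. \<Prod>j=1..n. P i j x) ` {1..m})) = Max ((\<lambda>i. log B (\<Prod>j=1..n. P i j x)) ` {1..m})"
          using m pos by (intro log_Max[OF B]) (auto intro!: prod_pos)
        also have "\<dots> = Max ((\<lambda>i. \<Sum>j\<in>{1..n}. X (i, j) x) ` {1..m})"
          unfolding X_def using pos by (intro arg_cong[where f=Max] image_cong refl) (auto intro!: log_prod'[OF B])
        finally show "(x \<in> {x \<in> space M. frac (log B (Max ((\<lambda>i. \<Prod>j=1..n. P i j x) ` {1..m}))) \<le> \<delta>})
          \<longleftrightarrow> (x \<in> {x\<in>space M. frac (Max ((\<lambda>i. \<Sum>j\<in>{1..n}. X (i, j) x) ` {1..m})) \<le> \<delta>})" by simp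
      qed
      have rvX: "\<And>p. p \<in> {1..m} \<times> {1..} \<Longrightarrow> random_variable borel (X p)"
        using indX unfolding indep_vars_def by auto
      have m1: "{x \<in> space M. frac (log B (Max ((\<lambda>i. \<Prod>j=1..n. P i j x) ` {1..m}))) \<le> \<delta>} \<in> events"
        using rvP by measurable
      have m2: "{x\<in>space M. frac (Max ((\<lambda>i. \<Sum>j\<in>{1..n}. X (i, j) x) ` {1..m})) \<le> \<delta>} \<in> events"
        using rvX by measurable
      show ?thesis unfolding set1 by (rule measure_eq_AE[OF AEeq m1 m2])
    qed
    show "(\<lambda>n. measure M {x \<in> space M. significand B (Max ((\<lambda>i. \<Prod>j=1..n. P i j x) ` {1..m})) \<le> D}) \<longlonglongrightarrow> log B D"
      using lim unfolding eq \<delta>_def .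
  qed
qed

end
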